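(* Let $P$ be a finite poset with $b$ bottlenecks, and let $\mathcal{S}$ denote the set of all convex subsets of $P$ with exactly one interior element. Then $$\sum_{S\in\mathcal{S}}(-1)^{|S|}=-b.$$
   Context: A subset $I\subseteq P$ is an order ideal if $x\in I$ and $y\le x$ imply $y\in I$; a subset $J\subseteq P$ is an order filter if $x\in J$ and $y\ge x$ imply $y\in J$. A subset $C\subseteq P$ is convex (in the double shelling antimatroid of $P$) if $C=P\setminus(I\cup J)$ for some order ideal $I$ and order filter $J$. An element $x$ of a convex set $C$ is interior to $C$ if it is neither a minimal nor a maximal element of $C$ (equivalently, there are $a,c\in C$ with $a<x<c$). A bottleneck of $P$ is an element that is neither maximal nor minimal in $P$ but is comparable to every element of $P$. *)

theory Defs
  imports Main
begin

text \<open>A finite poset is modelled as a finite carrier set P in a type of class order,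
  with the induced order.\<close>

definition order_ideal :: "'a::order set \<Rightarrow> 'a set \<Rightarrow> bool" where
  "order_ideal P I \<longleftrightarrow> I \<subseteq> P \<and> (\<forall>x\<in>I. \<forall>y\<in>P. y \<le> x \<longrightarrow> y \<in> I)"

definition order_filter :: "'a::order set \<Rightarrow> 'a set \<Rightarrow> bool" where
  "order_filter P J \<longleftrightarrow> J \<subseteq> P \<and> (\<forall>x\<in>J. \<forall>y\<in>P. x \<le> y \<longrightarrow> y \<in> J)"

definition convex_set :: "'a::order set \<Rightarrow> 'a set \<Rightarrow> bool" where
  "convex_set P C \<longleftrightarrow> (\<exists>I J. order_ideal P I \<and> order_filter P J \<and> C = P - (I \<union> J))"

definition interior_elem :: "'a::order set \<Rightarrow> 'a \<Rightarrow> bool" where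
  "interior_elem C x \<longleftrightarrow> x \<in> C \<and> (\<exists>a\<in>C. \<exists>c\<in>C. a < x \<and> x < c)"

definition bottleneck :: "'a::order set \<Rightarrow> 'a \<Rightarrow> bool" where
  "bottleneck P x \<longleftrightarrow> x \<in> P \<and> (\<exists>y\<in>P. y < x) \<and> (\<exists>y\<in>P. x < y)
     \<and> (\<forall>y\<in>P. x \<le> y \<or> y \<le> x)"

end

theory Submission
  imports Defs
begin


definition chull :: "'a::order set \<Rightarrow> 'a set \<Rightarrow> 'a set" where
  "chull P A = {y\<in>P. \<exists>a\<in>A. \<exists>c\<in>A. a \<le> y \<and> y \<le> c}"

definition intr :: "'a::order set \<Rightarrow> 'a set" where
  "intr C = {x. interior_elem C x}"

lemma convex_iff:
  "convex_set P C \<longleftrightarrow> C \<subseteq> P \<and> (\<forall>a\<in>C. \<forall>c\<in>C. \<forall>y\<in>P. a \<le> y \<and> y \<le> c \<longrightarrow> y \<in> C)"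
proof
  assume "convex_set P C"
  then obtain I J where I: "order_ideal P I" and J: "order_filter P J" and C: "C = P - (I \<union> J)"
    by (auto simp: convex_set_def)
  show "C \<subseteq> P \<and> (\<forall>a\<in>C. \<forall>c\<in>C. \<forall>y\<in>P. a \<le> y \<and> y \<le> c \<longrightarrow> y \<in> C)"
  proof (intro conjI ballI impI)
    show "C \<subseteq> P" using C by auto
    fix a c y assume a: "a\<in>C" "c\<in>C" "y\<in>P" "a\<le>y \<and> y\<le>c"
    have "y \<notin> I" using I a C unfolding order_ideal_def by blast
    moreover have "y \<notin> J" using J a C unfolding order_filter_def by blast
    ultimately show "y \<in> C" using C a by blast
  qed
next
  assume H: "C \<subseteq> P \<and> (\<forall>a\<in>C. \<forall>c\<in>C. \<forall>y\<in>P. a \<le> y \<and> y \<le> c \<longrightarrow> y \<in> C)"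
  let ?I = "{y\<in>P. \<not>(\<exists>c\<in>C. c \<le> y)}"
  let ?J = "{y\<in>P. \<not>(\<exists>c\<in>C. y \<le> c)}"
  have "order_ideal P ?I" unfolding order_ideal_def by (blast intro: order_trans)
  moreover have "order_filter P ?J" unfolding order_filter_def by (blast intro: order_trans)
  moreover have "C = P - (?I \<union> ?J)" using H by auto
  ultimately show "convex_set P C" unfolding convex_set_def by blast
qed

lemma intr_sub: "intr C \<subseteq> C" by (auto simp: intr_def interior_elem_def)

lemma chull_convex: "convex_set P (chull P A)"
  unfolding convex_iff chull_def by (blast intro: order_trans)

lemma chull_eq:
  assumes "finite P" "convex_set P C" "A \<subseteq> P"
  shows "chull P A = C \<longleftrightarrow> (C - intr C \<subseteq> A \<and> A \<subseteq> C)"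
proof
  assume h: "chull P A = C"
  have "A \<subseteq> chull P A" using assms(3) unfolding chull_def by blast
  hence AC: "A \<subseteq> C" using h by simp
  moreover have "C - intr C \<subseteq> A"
  proof
    fix e assume e: "e \<in> C - intr C"
    hence "e \<in> chull P A" using h by simp
    then obtain a c where ac: "a\<in>A" "c\<in>A" "a \<le> e" "e \<le> c" unfolding chull_def by blast
    show "e \<in> A"
    proof (rule ccontr)
      assume "e \<notin> A"
      hence "a < e" "e < c" using ac by (metis order.order_iff_strict)+
      moreover have "a \<in> C" "c \<in> C" using ac AC by auto
      ultimately have "interior_elem C e" using e unfolding interior_elem_def by blast
      thus False using e by (simp add: intr_def)
    qed
  qed
  ultimately show "C - intr C \<subseteq> A \<and> A \<subseteq> C" by blast
next
  assume h: "C - intr C \<subseteq> A \<and> A \<subseteq> C"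
  have CP: "C \<subseteq> P" and cv: "\<forall>a\<in>C. \<forall>c\<in>C. \<forall>y\<in>P. a \<le> y \<and> y \<le> c \<longrightarrow> y \<in> C"
    using assms(2) unfolding convex_iff by blast+
  have fC: "finite C" using CP assms(1) finite_subset by blast
  show "chull P A = C"
  proof
    show "chull P A \<subseteq> C"
    proof
      fix y assume "y \<in> chull P A"
      then obtain a c where "y \<in> P" "a \<in> A" "c \<in> A" "a \<le> y" "y \<le> c" unfolding chull_def by blast
      moreover have "a \<in> C" "c \<in> C" using h \<open>a \<in> A\<close> \<open>c \<in> A\<close> by blast+
      ultimately show "y \<in> C" using cv by blast
    qed
    show "C \<subseteq> chull P A"
    proof
      fix y assume y: "y \<in> C"
      obtain m where m: "m \<in> C" "m \<le> y" "\<forall>b\<in>C. b \<le> m \<longrightarrow> m = b"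
        using finite_has_minimal2[OF fC y] by blast
      obtain M where M: "M \<in> C" "y \<le> M" "\<forall>b\<in>C. M \<le> b \<longrightarrow> M = b"
        using finite_has_maximal2[OF fC y] by blast
      have "m \<notin> intr C"
      proof
        assume "m \<in> intr C"
        then obtain a where "a \<in> C" "a < m" unfolding intr_def interior_elem_def by blast
        thus False using m(3) by (metis less_irrefl less_imp_le)
      qed
      hence "m \<in> A" using h m(1) by blast
      have "M \<notin> intr C"
      proof
        assume "M \<in> intr C"
        then obtain a where "a \<in> C" "M < a" unfolding intr_def interior_elem_def by blast
        thus False using M(3) by (metis less_irrefl less_imp_le)
      qed
      hence "M \<in> A" using h M(1) by blast
      have "y \<in> P" using y CP by blast
      thus "y \<in> chull P A" unfolding chull_def using \<open>m \<in> A\<close> \<open>M \<in> A\<close> m(2) M(2) by blast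
    qed
  qed
qed

lemma alt_pow: "finite F \<Longrightarrow> (\<Sum>A\<in>Pow F. (-1::int)^card A) = (if F={} then 1 else 0)"
proof (induction F rule: finite_induct)
  case empty thus ?case by simp
next
  case (insert a F)
  have inj: "inj_on (insert a) (Pow F)" using insert(2) unfolding inj_on_def by (metis Pow_iff insert_ident subset_iff)
  have disj: "Pow F \<inter> insert a ` Pow F = {}" using insert(2) by auto
  have "(\<Sum>A\<in>insert a ` Pow F. (-1::int)^card A) = (\<Sum>A\<in>Pow F. (-1::int)^card (insert a A))"
    by (rule sum.reindex[OF inj, unfolded comp_def])
  also have "\<dots> = (\<Sum>A\<in>Pow F. - ((-1::int)^card A))"
  proof (rule sum.cong)
    fix A assume "A \<in> Pow F"
    hence "finite A" "a \<notin> A" using insert(1,2) finite_subset by auto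
    thus "(-1::int)^card (insert a A) = - ((-1::int)^card A)" by simp
  qed simp
  finally have e: "(\<Sum>A\<in>insert a ` Pow F. (-1::int)^card A) = - (\<Sum>A\<in>Pow F. (-1::int)^card A)"
    by (simp add: sum_negf)
  have "(\<Sum>A\<in>Pow (insert a F). (-1::int)^card A) = (\<Sum>A\<in>Pow F \<union> insert a ` Pow F. (-1::int)^card A)"
    by (simp add: Pow_insert)
  also have "\<dots> = (\<Sum>A\<in>Pow F. (-1::int)^card A) + (\<Sum>A\<in>insert a ` Pow F. (-1::int)^card A)"
    using insert(1) disj by (intro sum.union_disjoint) auto
  finally show ?case using e by simp
qed

lemma alt_interval:
  assumes "finite F" "E \<subseteq> F"
  shows "(\<Sum>A\<in>{A. E \<subseteq> A \<and> A \<subseteq> F}. (-1::int)^card A) = (if E = F then (-1)^card E else 0)"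
proof -
  have im: "{A. E \<subseteq> A \<and> A \<subseteq> F} = (\<lambda>T. E \<union> T) ` Pow (F - E)"
  proof
    show "{A. E \<subseteq> A \<and> A \<subseteq> F} \<subseteq> (\<lambda>T. E \<union> T) ` Pow (F - E)"
    proof
      fix A assume "A \<in> {A. E \<subseteq> A \<and> A \<subseteq> F}"
      hence "A = E \<union> (A - E)" "A - E \<in> Pow (F - E)" by auto
      thus "A \<in> (\<lambda>T. E \<union> T) ` Pow (F - E)" by blast
    qed
  qed (use assms in auto)
  have inj: "inj_on (\<lambda>T. E \<union> T) (Pow (F - E))" unfolding inj_on_def by blast
  have fE: "finite E" using assms finite_subset by blast
  have "(\<Sum>A\<in>{A. E \<subseteq> A \<and> A \<subseteq> F}. (-1::int)^card A) = (\<Sum>T\<in>Pow (F - E). (-1::int)^card (E \<union> T))"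
    unfolding im by (rule sum.reindex[OF inj, unfolded comp_def])
  also have "\<dots> = (\<Sum>T\<in>Pow (F - E). (-1::int)^card E * (-1)^card T)"
  proof (rule sum.cong)
    fix T assume T: "T \<in> Pow (F - E)"
    hence "finite T" using assms(1) by (meson Diff_subset PowD finite_subset)
    hence "card (E \<union> T) = card E + card T" using T fE by (subst card_Un_disjoint) auto
    thus "(-1::int)^card (E \<union> T) = (-1)^card E * (-1)^card T" by (simp add: power_add)
  qed simp
  also have "\<dots> = (-1)^card E * (if F - E = {} then 1 else 0)"
    using assms by (simp add: sum_distrib_left[symmetric] alt_pow)
  finally show ?thesis using assms by auto
qed


lemma finite_convex: "finite P \<Longrightarrow> finite {C. convex_set P C}"
  by (rule finite_subset[of _ "Pow P"]) (auto simp: convex_iff)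

lemma inner_sum:
  assumes fP: "finite P" and cvx: "convex_set P C"
  shows "(\<Sum>A\<in>{A. A \<in> {A. A \<subseteq> P - {x} \<and> x \<in> chull P A} \<and> chull P A = C}. (-1::int)^card A)
       = (if intr C = {x} then - ((-1)^card C) else 0)"
proof (cases "x \<in> intr C")
  case True
  have CP: "C \<subseteq> P" using cvx by (simp add: convex_iff)
  have xC: "x \<in> C" using True intr_sub by blast
  have fC: "finite C" using CP fP finite_subset by blast
  have eq: "{A. A \<in> {A. A \<subseteq> P - {x} \<and> x \<in> chull P A} \<and> chull P A = C}
          = {A. C - intr C \<subseteq> A \<and> A \<subseteq> C - {x}}"
  proof (intro set_eqI iffI)
    fix A assume "A \<in> {A. A \<in> {A. A \<subseteq> P - {x} \<and> x \<in> chull P A} \<and> chull P A = C}"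
    hence A: "A \<subseteq> P - {x}" "chull P A = C" by auto
    hence "C - intr C \<subseteq> A \<and> A \<subseteq> C" using chull_eq[OF fP cvx, of A] by blast
    thus "A \<in> {A. C - intr C \<subseteq> A \<and> A \<subseteq> C - {x}}" using A(1) by blast
  next
    fix A assume "A \<in> {A. C - intr C \<subseteq> A \<and> A \<subseteq> C - {x}}"
    hence A: "C - intr C \<subseteq> A" "A \<subseteq> C - {x}" by auto
    hence AP: "A \<subseteq> P" using CP by blast
    hence "chull P A = C" using chull_eq[OF fP cvx AP] A by blast
    thus "A \<in> {A. A \<in> {A. A \<subseteq> P - {x} \<and> x \<in> chull P A} \<and> chull P A = C}"
      using A AP xC by blast
  qed
  have sub: "C - intr C \<subseteq> C - {x}" using True by blast
  have fF: "finite (C - {x})" using fC by blast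
  have iff: "(C - intr C = C - {x}) \<longleftrightarrow> intr C = {x}" using True intr_sub[of C] by blast
  show ?thesis
  proof (cases "intr C = {x}")
    case True2: True
    have "card C = Suc (card (C - {x}))" using card_Suc_Diff1[OF fC xC] by simp
    hence "(-1::int)^card (C - {x}) = - ((-1)^card C)" by simp
    thus ?thesis unfolding eq alt_interval[OF fF sub] using True2 iff by simp
  next
    case False
    thus ?thesis unfolding eq alt_interval[OF fF sub] using iff by simp
  qed
next
  case False
  have E: "{A. A \<in> {A. A \<subseteq> P - {x} \<and> x \<in> chull P A} \<and> chull P A = C} = {}"
  proof (rule ccontr)
    assume "{A. A \<in> {A. A \<subseteq> P - {x} \<and> x \<in> chull P A} \<and> chull P A = C} \<noteq> {}"
    then obtain A where A: "A \<subseteq> P - {x}" "x \<in> chull P A" "chull P A = C" by blast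
    have "A \<subseteq> P" using A by blast
    hence "C - intr C \<subseteq> A" using chull_eq[OF fP cvx] A(3) by blast
    moreover have "x \<in> C - intr C" using A False by blast
    ultimately show False using A(1) by blast
  qed
  have "intr C \<noteq> {x}" using False by blast
  thus ?thesis unfolding E by simp
qed

lemma per_x_A:
  assumes fP: "finite P"
  shows "(\<Sum>A\<in>{A. A \<subseteq> P - {x} \<and> x \<in> chull P A}. (-1::int)^card A)
       = - (\<Sum>C\<in>{C. convex_set P C \<and> intr C = {x}}. (-1::int)^card C)"
proof -
  let ?AA = "{A. A \<subseteq> P - {x} \<and> x \<in> chull P A}"
  let ?K = "{C. convex_set P C}"
  have fA: "finite ?AA" by (rule finite_subset[of _ "Pow P"]) (use fP in auto)
  have fK: "finite ?K" using finite_convex[OF fP] .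
  have img: "chull P ` ?AA \<subseteq> ?K" using chull_convex by blast
  have "(\<Sum>A\<in>?AA. (-1::int)^card A) = (\<Sum>C\<in>?K. \<Sum>A\<in>{A. A \<in> ?AA \<and> chull P A = C}. (-1::int)^card A)"
    using sum.group[OF fA fK img, of "\<lambda>A. (-1::int)^card A"] by simp
  also have "\<dots> = (\<Sum>C\<in>?K. if intr C = {x} then - ((-1::int)^card C) else 0)"
  proof (rule sum.cong[OF refl])
    fix C assume "C \<in> ?K"
    hence cv: "convex_set P C" by simp
    show "(\<Sum>A\<in>{A. A \<in> ?AA \<and> chull P A = C}. (-1::int)^card A) = (if intr C = {x} then - ((-1::int)^card C) else 0)"
      by (rule inner_sum[OF fP cv])
  qed
  also have "\<dots> = (\<Sum>C\<in>{C \<in> ?K. intr C = {x}}. - ((-1::int)^card C))"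
    using sum.inter_filter[OF fK, of "\<lambda>C. - ((-1::int)^card C)" "\<lambda>C. intr C = {x}"] by simp
  also have "\<dots> = - (\<Sum>C\<in>{C. convex_set P C \<and> intr C = {x}}. (-1::int)^card C)"
    by (simp add: sum_negf)
  finally show ?thesis .
qed


lemma per_x_B:
  assumes fP: "finite P" and xP: "x \<in> P"
  shows "(\<Sum>A\<in>{A. A \<subseteq> P - {x} \<and> x \<in> chull P A}. (-1::int)^card A)
       = (if bottleneck P x then 1 else 0)"
proof -
  define X where "X = P - {x}"
  define D where "D = {y\<in>P. y < x}"
  define U where "U = {y\<in>P. x < y}"
  have fX: "finite X" using fP X_def by blast
  have AA: "{A. A \<subseteq> P - {x} \<and> x \<in> chull P A} = {A. A \<subseteq> X \<and> A \<inter> D \<noteq> {} \<and> A \<inter> U \<noteq> {}}"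
  proof (intro set_eqI iffI)
    fix A assume "A \<in> {A. A \<subseteq> P - {x} \<and> x \<in> chull P A}"
    hence A: "A \<subseteq> P - {x}" "x \<in> chull P A" by auto
    then obtain a c where ac: "a \<in> A" "c \<in> A" "a \<le> x" "x \<le> c" unfolding chull_def by blast
    have "a \<noteq> x" "c \<noteq> x" "a \<in> P" "c \<in> P" using A(1) ac by auto
    hence "a \<in> D" "c \<in> U" using ac unfolding D_def U_def by (simp_all add: less_le)
    thus "A \<in> {A. A \<subseteq> X \<and> A \<inter> D \<noteq> {} \<and> A \<inter> U \<noteq> {}}" using A(1) ac(1,2) X_def by blast
  next
    fix A assume "A \<in> {A. A \<subseteq> X \<and> A \<inter> D \<noteq> {} \<and> A \<inter> U \<noteq> {}}"
    hence A: "A \<subseteq> X" "A \<inter> D \<noteq> {}" "A \<inter> U \<noteq> {}" by auto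
    then obtain a c where "a \<in> A" "c \<in> A" "a < x" "x < c" unfolding D_def U_def by blast
    hence "x \<in> chull P A" unfolding chull_def using xP by (blast intro: less_imp_le)
    thus "A \<in> {A. A \<subseteq> P - {x} \<and> x \<in> chull P A}" using A(1) X_def by blast
  qed
  let ?S = "{A. A \<subseteq> X \<and> A \<inter> D \<noteq> {} \<and> A \<inter> U \<noteq> {}}"
  let ?g = "\<lambda>A. (-1::int)^card A"
  have split: "Pow X = ?S \<union> (Pow (X - D) \<union> Pow (X - U))" by blast
  have disj: "?S \<inter> (Pow (X - D) \<union> Pow (X - U)) = {}" by blast
  have fS: "finite ?S" by (rule finite_subset[of _ "Pow X"]) (use fX in auto)
  have f1: "finite (Pow (X - D))" "finite (Pow (X - U))" using fX by auto
  have "sum ?g (Pow X) = sum ?g ?S + sum ?g (Pow (X - D) \<union> Pow (X - U))"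
    unfolding split using fS f1 disj by (intro sum.union_disjoint) auto
  moreover have "sum ?g (Pow (X - D) \<union> Pow (X - U)) + sum ?g (Pow (X - D) \<inter> Pow (X - U))
      = sum ?g (Pow (X - D)) + sum ?g (Pow (X - U))"
    using f1 by (rule sum.union_inter)
  moreover have "Pow (X - D) \<inter> Pow (X - U) = Pow (X - D - U)" by blast
  ultimately have eq: "sum ?g ?S = (if X = {} then 1 else 0) - (if X - D = {} then 1 else 0)
      - (if X - U = {} then 1 else 0) + (if X - D - U = {} then 1 else 0)"
    using fX by (simp add: alt_pow)
  have DX: "D \<subseteq> X" "U \<subseteq> X" unfolding D_def U_def X_def by auto
  have DU: "D \<inter> U = {}" unfolding D_def U_def by auto
  have bn: "bottleneck P x \<longleftrightarrow> D \<noteq> {} \<and> U \<noteq> {} \<and> X - D - U = {}"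
  proof
    assume b: "bottleneck P x"
    have "X - D - U = {}"
    proof (rule ccontr)
      assume "X - D - U \<noteq> {}"
      then obtain y where y: "y \<in> P" "y \<noteq> x" "\<not> y < x" "\<not> x < y" unfolding X_def D_def U_def by blast
      moreover have "x \<le> y \<or> y \<le> x" using b y(1) unfolding bottleneck_def by blast
      ultimately show False by (auto simp: less_le)
    qed
    thus "D \<noteq> {} \<and> U \<noteq> {} \<and> X - D - U = {}" using b unfolding bottleneck_def D_def U_def by blast
  next
    assume h: "D \<noteq> {} \<and> U \<noteq> {} \<and> X - D - U = {}"
    have "\<forall>y\<in>P. x \<le> y \<or> y \<le> x"
    proof
      fix y assume "y \<in> P"
      show "x \<le> y \<or> y \<le> x"
      proof (cases "y = x")
        case False
        hence "y \<in> D \<or> y \<in> U" using h \<open>y \<in> P\<close> unfolding X_def by blast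
        thus ?thesis unfolding D_def U_def by (auto intro: less_imp_le)
      qed simp
    qed
    thus "bottleneck P x" using h xP unfolding bottleneck_def D_def U_def by blast
  qed
  show ?thesis
  proof (cases "D = {} \<or> U = {}")
    case True
    hence "bottleneck P x = False" using bn by blast
    moreover have "sum ?g ?S = 0" using True eq DX by (auto simp: Diff_empty)
    ultimately show ?thesis using AA by simp
  next
    case False
    hence "X \<noteq> {}" "X - D \<noteq> {}" "X - U \<noteq> {}" using DX DU by blast+
    hence "sum ?g ?S = (if X - D - U = {} then 1 else 0)" using eq by simp
    thus ?thesis using AA bn False by simp
  qed
qed

theorem theorem4p9:
  fixes P :: "'a::order set"
  assumes "finite P"
  shows "(\<Sum>S\<in>{C. convex_set P C \<and> card {x. interior_elem C x} = 1}. (-1::int) ^ card S)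
         = - int (card {x. bottleneck P x})"
proof -
  have fP: "finite P" by fact
  let ?SS = "{C. convex_set P C \<and> card {x. interior_elem C x} = 1}"
  let ?g = "\<lambda>C. (-1::int)^card C"
  have SS: "?SS = {C. convex_set P C \<and> (\<exists>x. intr C = {x})}"
  proof -
    have "\<And>C. card {x. interior_elem C x} = 1 \<longleftrightarrow> (\<exists>x. intr C = {x})"
      unfolding intr_def using card_1_singleton_iff by (metis One_nat_def)
    thus ?thesis by (intro Collect_cong) blast
  qed
  have fS: "finite ?SS" by (rule finite_subset[OF _ finite_convex[OF fP]]) blast
  have img: "(\<lambda>C. the_elem (intr C)) ` ?SS \<subseteq> P"
  proof
    fix y assume "y \<in> (\<lambda>C. the_elem (intr C)) ` ?SS"
    then obtain C z where "convex_set P C" "intr C = {z}" "y = the_elem (intr C)" unfolding SS by blast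
    moreover hence "C \<subseteq> P" by (simp add: convex_iff)
    ultimately show "y \<in> P" using intr_sub[of C] by auto
  qed
  have "sum ?g ?SS = (\<Sum>x\<in>P. sum ?g {C. C \<in> ?SS \<and> the_elem (intr C) = x})"
    using sum.group[OF fS fP img, of ?g] by simp
  also have "\<dots> = (\<Sum>x\<in>P. sum ?g {C. convex_set P C \<and> intr C = {x}})"
  proof (rule sum.cong[OF refl])
    fix x assume "x \<in> P"
    have "{C. C \<in> ?SS \<and> the_elem (intr C) = x} = {C. convex_set P C \<and> intr C = {x}}"
    proof (intro set_eqI iffI)
      fix C assume "C \<in> {C. C \<in> ?SS \<and> the_elem (intr C) = x}"
      then obtain z where "convex_set P C" "intr C = {z}" "the_elem (intr C) = x" unfolding SS by blast
      thus "C \<in> {C. convex_set P C \<and> intr C = {x}}" by simp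
    next
      fix C assume "C \<in> {C. convex_set P C \<and> intr C = {x}}"
      hence "convex_set P C" "intr C = {x}" by auto
      thus "C \<in> {C. C \<in> ?SS \<and> the_elem (intr C) = x}" unfolding SS by simp
    qed
    thus "sum ?g {C. C \<in> ?SS \<and> the_elem (intr C) = x} = sum ?g {C. convex_set P C \<and> intr C = {x}}"
      by simp
  qed
  also have "\<dots> = (\<Sum>x\<in>P. - (if bottleneck P x then 1 else 0))"
  proof (rule sum.cong[OF refl])
    fix x assume xP: "x \<in> P"
    show "sum ?g {C. convex_set P C \<and> intr C = {x}} = - (if bottleneck P x then 1 else 0)"
      using per_x_A[OF fP, of x] per_x_B[OF fP xP] by simp
  qed
  also have "\<dots> = - (\<Sum>x\<in>P. (if bottleneck P x then 1 else 0))" by (simp add: sum_negf)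
  also have "(\<Sum>x\<in>P. (if bottleneck P x then 1 else 0)) = (\<Sum>x\<in>{x\<in>P. bottleneck P x}. (1::int))"
    using sum.inter_filter[OF fP, of "\<lambda>_. (1::int)" "bottleneck P"] by simp
  also have "\<dots> = int (card {x. bottleneck P x})"
  proof -
    have "{x\<in>P. bottleneck P x} = {x. bottleneck P x}" by (auto simp: bottleneck_def)
    thus ?thesis by simp
  qed
  finally show ?thesis .
qed

end
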